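(* Let $(\Omega,\mathcal{F},\mathbb{P})$ be a nonatomic probability space and $(\Phi,\Psi)$ an Orlicz pair as in the context. For every $X\in L^\Phi$ and every $Y\in L^\Psi$ with $Y\ge0$, the net $\big(\mathbb{E}\big[\,|\mathbb{E}[X|\pi]-X|\,Y\big]\big)_{\pi\in\Pi}$ converges to $0$.
   Context: $(\Omega,\mathcal{F},\mathbb{P})$ is a nonatomic probability space. An Orlicz function is a convex, increasing $\Phi:[0,\infty)\to[0,\infty)$ with $\Phi(0)=0$; its conjugate is $\Psi(s)=\sup_{t\ge0}(ts-\Phi(t))$. Standing assumption: $\Phi(t)>0$ for $t>0$ and $\lim_{t\to\infty}\Phi(t)/t=\infty$. $L^\Phi$ is the space of random variables $X$ (mod a.s. equality) with $\|X\|_\Phi:=\inf\{\lambda>0:\mathbb{E}[\Phi(|X|/\lambda)]\le 1\}<\infty$; $L^\Psi$ analogously. $\Pi$ denotes the set of all finite measurable partitions $\pi$ of $\Omega$ whose members all have nonzero probability, directed by refinement ($\pi'\ge\pi$ iff $\pi'$ refines $\pi$); $\mathbb{E}[X|\pi]:=\mathbb{E}[X|\sigma(\pi)]$, where $\sigma(\pi)$ is the $\sigma$-algebra generated by $\pi$. *)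

theory Defs
  imports "HOL-Probability.Probability"
begin

definition nonatomic :: "'a measure \<Rightarrow> bool" where
  "nonatomic M \<longleftrightarrow> (\<forall>A\<in>sets M. 0 < measure M A \<longrightarrow>
      (\<exists>B\<in>sets M. B \<subseteq> A \<and> 0 < measure M B \<and> measure M B < measure M A))"

definition orlicz_function :: "(real \<Rightarrow> real) \<Rightarrow> bool" where
  "orlicz_function \<Phi> \<longleftrightarrow>
     convex_on {0..} \<Phi> \<and> mono_on {0..} \<Phi> \<and> \<Phi> 0 = 0 \<and>
     (\<forall>t>0. \<Phi> t > 0) \<and> filterlim (\<lambda>t. \<Phi> t / t) at_top at_top"

definition orlicz_conj :: "(real \<Rightarrow> real) \<Rightarrow> real \<Rightarrow> real" where
  "orlicz_conj \<Phi> s = (SUP t\<in>{0..}. t * s - \<Phi> t)"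

text \<open>Orlicz space: measurable X with finite Luxemburg norm, i.e. some lambda > 0
  with E[Phi(|X|/lambda)] <= 1.\<close>
definition orlicz_space :: "'a measure \<Rightarrow> (real \<Rightarrow> real) \<Rightarrow> ('a \<Rightarrow> real) set" where
  "orlicz_space M \<Phi> = {X \<in> borel_measurable M.
      \<exists>c>0. (\<integral>\<^sup>+ \<omega>. ennreal (\<Phi> (\<bar>X \<omega>\<bar> / c)) \<partial>M) \<le> 1}"

definition fin_partitions :: "'a measure \<Rightarrow> 'a set set set" where
  "fin_partitions M = {\<pi>. finite \<pi> \<and> \<pi> \<subseteq> sets M \<and> disjoint \<pi> \<and> \<Union>\<pi> = space M \<and>
      (\<forall>A\<in>\<pi>. 0 < measure M A)}"

definition refines :: "'a set set \<Rightarrow> 'a set set \<Rightarrow> bool" where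
  "refines \<pi>' \<pi> \<longleftrightarrow> (\<forall>B\<in>\<pi>'. \<exists>A\<in>\<pi>. B \<subseteq> A)"

definition cond_exp_part :: "'a measure \<Rightarrow> 'a set set \<Rightarrow> ('a \<Rightarrow> real) \<Rightarrow> 'a \<Rightarrow> real" where
  "cond_exp_part M \<pi> X = real_cond_exp M (sigma (space M) \<pi>) X"

end

theory Submission
  imports Defs
begin

lemma conj_bdd:
  assumes "orlicz_function \<Phi>"
  shows "bdd_above ((\<lambda>t. t * s - \<Phi> t) ` {0..})"
proof -
  have lim: "filterlim (\<lambda>t. \<Phi> t / t) at_top at_top" and mo: "mono_on {0..} \<Phi>" and z: "\<Phi> 0 = 0"
    using assms unfolding orlicz_function_def by auto
  have "eventually (\<lambda>t. \<bar>s\<bar> + 1 \<le> \<Phi> t / t) at_top"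
    using lim[unfolded filterlim_at_top] by blast
  then obtain T0 where T0: "\<And>t. t \<ge> T0 \<Longrightarrow> \<bar>s\<bar> + 1 \<le> \<Phi> t / t"
    by (auto simp: eventually_at_top_linorder)
  define T where "T = max T0 1"
  have "t * s - \<Phi> t \<le> T * \<bar>s\<bar>" if "t \<ge> 0" for t
  proof (cases "t \<ge> T")
    case True
    then have "t > 0" "t \<ge> T0" unfolding T_def by auto
    have "\<bar>s\<bar> + 1 \<le> \<Phi> t / t" using T0 \<open>t \<ge> T0\<close> by blast
    then have "(\<bar>s\<bar> + 1) * t \<le> \<Phi> t" using \<open>t > 0\<close> by (simp add: pos_le_divide_eq)
    moreover have "t * s \<le> t * \<bar>s\<bar>" using \<open>t > 0\<close> by (simp add: mult_left_mono)
    moreover have "0 \<le> T * \<bar>s\<bar>" unfolding T_def by auto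
    moreover have "(\<bar>s\<bar> + 1) * t = t * \<bar>s\<bar> + t" by (simp add: algebra_simps)
    ultimately show ?thesis using \<open>t > 0\<close> by linarith
  next
    case False
    have p: "0 \<le> \<Phi> t" using mo that z unfolding mono_on_def by (metis atLeast_iff order_refl)
    have "t * s \<le> t * \<bar>s\<bar>" using that by (simp add: mult_left_mono)
    also have "\<dots> \<le> T * \<bar>s\<bar>" using False by (intro mult_right_mono) auto
    finally have "t * s \<le> T * \<bar>s\<bar>" .
    then show ?thesis using p by simp
  qed
  then show ?thesis by (auto simp: bdd_above_def)
qed

lemma young:
  assumes "orlicz_function \<Phi>" "0 \<le> a"
  shows "a * b \<le> \<Phi> a + orlicz_conj \<Phi> b"
proof -
  have "a * b - \<Phi> a \<le> orlicz_conj \<Phi> b"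
    unfolding orlicz_conj_def by (rule cSUP_upper[OF _ conj_bdd[OF assms(1)]]) (use assms in auto)
  then show ?thesis by simp
qed

lemma conj_nonneg:
  assumes "orlicz_function \<Phi>"
  shows "0 \<le> orlicz_conj \<Phi> s"
  using young[OF assms, of 0 s] assms unfolding orlicz_function_def by simp

lemma conj_mono:
  assumes "orlicz_function \<Phi>"
  shows "mono_on {0..} (orlicz_conj \<Phi>)"
proof (rule mono_onI)
  fix r s :: real assume "r \<in> {0..}" "s \<in> {0..}" "r \<le> s"
  show "orlicz_conj \<Phi> r \<le> orlicz_conj \<Phi> s"
    unfolding orlicz_conj_def
  proof (rule cSUP_least)
    show "{0::real..} \<noteq> {}" by auto
    fix t :: real assume "t \<in> {0..}"
    then have "t * r - \<Phi> t \<le> t * s - \<Phi> t" using \<open>r \<le> s\<close> by (simp add: mult_left_mono)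
    also have "\<dots> \<le> (SUP t\<in>{0..}. t * s - \<Phi> t)"
      by (rule cSUP_upper[OF \<open>t \<in> {0..}\<close> conj_bdd[OF assms]])
    finally show "t * r - \<Phi> t \<le> (SUP t\<in>{0..}. t * s - \<Phi> t)" .
  qed
qed

lemma ext_mono:
  assumes "mono_on {0..} G"
  shows "mono (\<lambda>t::real. G (max 0 t))"
  using assms unfolding mono_on_def mono_def by (auto intro!: max.mono)

lemma ext_convex:
  assumes "convex_on {0..} G" "mono_on {0..} G"
  shows "convex_on UNIV (\<lambda>t::real. G (max 0 t))"
proof (rule convex_onI)
  show "convex (UNIV::real set)" by simp
  fix t x y :: real assume t: "0 < t" "t < 1"
  have a1: "(1 - t) * x \<le> (1 - t) * max 0 x" "t * y \<le> t * max 0 y"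
    using t by (auto intro!: mult_left_mono)
  have a2: "0 \<le> (1 - t) * max 0 x" "0 \<le> t * max 0 y" using t by auto
  have "max 0 ((1 - t) * x + t * y) \<le> (1 - t) * max 0 x + t * max 0 y"
    using a1 a2 by (simp only: max.bounded_iff) linarith
  then have "G (max 0 ((1 - t) * x + t * y)) \<le> G ((1 - t) * max 0 x + t * max 0 y)"
    using assms(2) t unfolding mono_on_def by (auto intro!: add_nonneg_nonneg)
  also have "\<dots> \<le> (1 - t) * G (max 0 x) + t * G (max 0 y)"
    using convex_onD[OF assms(1), of t "max 0 x" "max 0 y"] t by simp
  finally show "G (max 0 ((1 - t) *\<^sub>R x + t *\<^sub>R y)) \<le> (1 - t) * G (max 0 x) + t * G (max 0 y)" by simp
qed

lemma fin_part_subalg: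
  assumes "prob_space M" "\<pi> \<in> fin_partitions M"
  shows "sigma_finite_subalgebra M (sigma (space M) \<pi>)"
proof -
  have sub: "\<pi> \<subseteq> sets M" "\<pi> \<subseteq> Pow (space M)"
    using assms(2) sets.sets_into_space by (auto simp: fin_partitions_def)
  have "sigma_sets (space M) \<pi> \<subseteq> sets M" by (rule sets.sigma_sets_subset[OF sub(1)])
  then have "subalgebra M (sigma (space M) \<pi>)"
    unfolding subalgebra_def using sub
    by (simp add: sets_measure_of[OF sub(2)] space_measure_of[OF sub(2)])
  then show ?thesis
    using assms(1)
    by (intro finite_measure_subalgebra_is_sigma_finite)
       (simp add: prob_space_def finite_measure_subalgebra_def finite_measure_subalgebra_axioms_def)
qed

lemma const_meas:
  assumes "\<pi> \<in> fin_partitions M" and const: "\<forall>B\<in>\<pi>. \<forall>x\<in>B. \<forall>y\<in>B. g x = g y"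
  shows "(g :: 'a \<Rightarrow> real) \<in> borel_measurable (sigma (space M) \<pi>)"
proof -
  have sub: "\<pi> \<subseteq> sets M" "\<pi> \<subseteq> Pow (space M)" and fin: "finite \<pi>" and dj: "disjoint \<pi>"
    and un: "\<Union>\<pi> = space M"
    using assms(1) sets.sets_into_space by (auto simp: fin_partitions_def)
  define c where "c B = g (SOME y. y \<in> B)" for B
  have eq: "g x = (\<Sum>B\<in>\<pi>. c B * indicator B x)" if x: "x \<in> space M" for x
  proof -
    obtain B0 where B0: "B0 \<in> \<pi>" "x \<in> B0" using x un by auto
    have "(\<Sum>B\<in>\<pi>. c B * indicator B x) = c B0 * indicator B0 x + (\<Sum>B\<in>\<pi>-{B0}. c B * indicator B x)"
      by (rule sum.remove[OF fin B0(1)])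
    also have "(\<Sum>B\<in>\<pi>-{B0}. c B * indicator B x) = 0"
    proof (rule sum.neutral, rule ballI)
      fix B assume "B \<in> \<pi> - {B0}"
      then have "B \<inter> B0 = {}" using dj B0 unfolding disjoint_def by blast
      then show "c B * indicator B x = 0" using B0 by (auto simp: indicator_def)
    qed
    also have "c B0 = g x" unfolding c_def using const B0 by (metis someI)
    finally show ?thesis using B0 by simp
  qed
  have "(\<lambda>x. \<Sum>B\<in>\<pi>. c B * indicator B x) \<in> borel_measurable (sigma (space M) \<pi>)"
    by (intro borel_measurable_sum borel_measurable_times borel_measurable_const borel_measurable_indicator)
       (auto simp: sets_measure_of[OF sub(2)])
  then show ?thesis
    by (rule measurable_cong[THEN iffD1, rotated]) (simp add: space_measure_of[OF sub(2)] eq)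
qed

lemma mk_partition:
  fixes S :: "'a \<Rightarrow> real"
  assumes pr: "prob_space M" and Sm: "S \<in> borel_measurable M" and Sf: "finite (S ` space M)"
  shows "\<exists>\<pi>0\<in>fin_partitions M. \<exists>S'. (\<forall>A\<in>\<pi>0. \<forall>x\<in>A. \<forall>y\<in>A. S' x = S' y)
          \<and> (AE x in M. S x = S' x) \<and> (\<forall>x\<in>space M. S' x \<in> S ` space M)"
proof -
  interpret prob_space M by (rule pr)
  define V where "V = S ` space M"
  define L where "L v = S -` {v} \<inter> space M" for v
  have Lm: "L v \<in> sets M" for v unfolding L_def by (rule measurable_sets[OF Sm]) simp
  define P where "P = {v\<in>V. 0 < measure M (L v)}"
  have finP: "finite P" using Sf unfolding P_def V_def by simp
  have "\<forall>v\<in>V-P. AE x in M. S x \<noteq> v"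
  proof
    fix v assume "v \<in> V - P"
    then have "measure M (L v) = 0" unfolding P_def using measure_nonneg[of M "L v"] by auto
    then have "emeasure M (L v) = 0" by (simp add: emeasure_eq_measure)
    then have "L v \<in> null_sets M" using Lm by (simp add: null_sets_def)
    then show "AE x in M. S x \<noteq> v"
      by (rule AE_I') (auto simp: L_def)
  qed
  then have "AE x in M. \<forall>v\<in>V-P. S x \<noteq> v"
    using Sf by (subst AE_finite_all) (auto simp: V_def)
  moreover note AE_space
  ultimately have AEP: "AE x in M. S x \<in> P"
    by eventually_elim (auto simp: V_def P_def)
  have "P \<noteq> {}"
  proof
    assume "P = {}"
    with AEP have "AE x in M. False" by simp
    then show False by simp
  qed
  then obtain v0 where v0: "v0 \<in> P" by auto
  define S' where "S' x = (if x \<in> S -` P \<inter> space M then S x else v0)" for x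
  have Pm: "S -` P \<inter> space M \<in> sets M"
    by (rule measurable_sets[OF Sm]) (simp add: finP borel_closed finite_imp_closed)
  have S'm: "S' \<in> borel_measurable M"
    unfolding S'_def by (rule measurable_If_set[OF Sm measurable_const]) (use Pm in auto)
  define \<pi>0 where "\<pi>0 = (\<lambda>v. {x\<in>space M. S' x = v}) ` P"
  have S'P: "S' x \<in> P" for x using v0 unfolding S'_def by auto
  have "\<pi>0 \<in> fin_partitions M"
    unfolding fin_partitions_def
  proof (intro CollectI conjI)
    show "finite \<pi>0" unfolding \<pi>0_def using finP by simp
    show "\<pi>0 \<subseteq> sets M" unfolding \<pi>0_def
      using measurable_sets[OF S'm, of "{v}" for v] by (auto simp: vimage_def Int_def conj_commute)
    show "disjoint \<pi>0" unfolding \<pi>0_def disjoint_def by auto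
    show "\<Union>\<pi>0 = space M" unfolding \<pi>0_def using S'P by auto
    show "\<forall>A\<in>\<pi>0. 0 < measure M A"
    proof
      fix A assume "A \<in> \<pi>0"
      then obtain v where v: "v \<in> P" "A = {x\<in>space M. S' x = v}" unfolding \<pi>0_def by auto
      have "L v \<subseteq> A" using v unfolding L_def S'_def by auto
      moreover have "A \<in> sets M" using v measurable_sets[OF S'm, of "{v}"] by (auto simp: vimage_def Int_def conj_commute)
      ultimately have "measure M (L v) \<le> measure M A" by (rule finite_measure_mono)
      with v show "0 < measure M A" unfolding P_def by auto
    qed
  qed
  moreover have "\<forall>A\<in>\<pi>0. \<forall>x\<in>A. \<forall>y\<in>A. S' x = S' y" unfolding \<pi>0_def by auto
  moreover have "AE x in M. S x = S' x" using AEP AE_space by eventually_elim (auto simp: S'_def)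
  moreover have "\<forall>x\<in>space M. S' x \<in> S ` space M" using v0 unfolding S'_def P_def V_def by auto
  ultimately show ?thesis by blast
qed

lemma orlicz_int:
  assumes mo: "mono_on {0..} G" and nn: "\<forall>t\<ge>0. 0 \<le> G t" and X: "X \<in> orlicz_space M G"
  obtains c where "c > 0" "integrable M (\<lambda>\<omega>. G (\<bar>X \<omega>\<bar> / c))" "X \<in> borel_measurable M"
proof -
  obtain c where c: "c > 0" "(\<integral>\<^sup>+ \<omega>. ennreal (G (\<bar>X \<omega>\<bar> / c)) \<partial>M) \<le> 1"
    and Xm: "X \<in> borel_measurable M"
    using X unfolding orlicz_space_def by auto
  have "(\<lambda>\<omega>. G (max 0 (\<bar>X \<omega>\<bar> / c))) \<in> borel_measurable M"
    using measurable_compose[OF _ borel_measurable_mono[OF ext_mono[OF mo]], of "\<lambda>\<omega>. \<bar>X \<omega>\<bar> / c" M]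
      Xm by simp
  then have m: "(\<lambda>\<omega>. G (\<bar>X \<omega>\<bar> / c)) \<in> borel_measurable M"
    using c(1) by (simp add: max_def)
  have "integrable M (\<lambda>\<omega>. G (\<bar>X \<omega>\<bar> / c))"
    by (rule integrableI_nonneg[OF m]) (use c nn in \<open>auto intro: le_less_trans\<close>)
  then show ?thesis using that c Xm by blast
qed

lemma tail_small:
  fixes h g :: "'a \<Rightarrow> real"
  assumes hi: "integrable M h" and gm[measurable]: "g \<in> borel_measurable M" and e: "e > 0"
  shows "\<exists>N. \<forall>n\<ge>N. (\<integral>\<omega>. \<bar>h \<omega>\<bar> * indicator {\<omega>\<in>space M. n < \<bar>g \<omega>\<bar>} \<omega> \<partial>M) < e"
proof -
  define s where "s k \<omega> = \<bar>h \<omega>\<bar> * indicator {\<omega>\<in>space M. real k < \<bar>g \<omega>\<bar>} \<omega>" for k \<omega>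
  have hm[measurable]: "h \<in> borel_measurable M" using hi by auto
  have sm: "s k \<in> borel_measurable M" for k unfolding s_def by measurable
  have lim: "AE \<omega> in M. (\<lambda>k. s k \<omega>) \<longlonglongrightarrow> (\<lambda>\<omega>. 0::real) \<omega>"
  proof (rule AE_I2)
    fix \<omega> assume "\<omega> \<in> space M"
    obtain k0 where "\<bar>g \<omega>\<bar> < real k0" using reals_Archimedean2 by blast
    then have "eventually (\<lambda>k. s k \<omega> = 0) sequentially"
      unfolding eventually_sequentially s_def
      by (intro exI[of _ k0]) (auto simp: indicator_def)
    then show "(\<lambda>k. s k \<omega>) \<longlonglongrightarrow> (\<lambda>\<omega>. 0::real) \<omega>" by (simp add: tendsto_eventually)
  qed
  have bnd: "\<And>k. AE \<omega> in M. norm (s k \<omega>) \<le> \<bar>h \<omega>\<bar>"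
    by (auto simp: s_def indicator_def)
  have hai: "integrable M (\<lambda>\<omega>. \<bar>h \<omega>\<bar>)" using hi by simp
  have conv: "(\<lambda>k. integral\<^sup>L M (s k)) \<longlonglongrightarrow> integral\<^sup>L M (\<lambda>\<omega>. 0::real)"
    by (rule integral_dominated_convergence[OF _ sm hai lim bnd]) simp
  have si: "integrable M (s k)" for k
    by (rule integrable_dominated_convergence2[OF _ sm hai lim bnd]) simp
  from conv have "eventually (\<lambda>k. dist (integral\<^sup>L M (s k)) 0 < e) sequentially"
    using e by (simp add: tendsto_iff)
  then obtain K where K: "dist (integral\<^sup>L M (s K)) 0 < e"
    unfolding eventually_sequentially by auto
  show ?thesis
  proof (intro exI[of _ "real K"] allI impI)
    fix n :: real assume n: "real K \<le> n"
    have "(\<integral>\<omega>. \<bar>h \<omega>\<bar> * indicator {\<omega>\<in>space M. n < \<bar>g \<omega>\<bar>} \<omega> \<partial>M) \<le> integral\<^sup>L M (s K)"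
    proof (rule integral_mono)
      show "integrable M (\<lambda>\<omega>. \<bar>h \<omega>\<bar> * indicator {\<omega>\<in>space M. n < \<bar>g \<omega>\<bar>} \<omega>)"
        by (rule integrable_real_mult_indicator[OF _ hai]) measurable
      show "integrable M (s K)" by (rule si)
      fix \<omega> show "\<bar>h \<omega>\<bar> * indicator {\<omega>\<in>space M. n < \<bar>g \<omega>\<bar>} \<omega> \<le> s K \<omega>"
        using n unfolding s_def by (auto simp: indicator_def)
    qed
    also have "\<dots> < e" using K by (simp add: dist_real_def)
    finally show "(\<integral>\<omega>. \<bar>h \<omega>\<bar> * indicator {\<omega>\<in>space M. n < \<bar>g \<omega>\<bar>} \<omega> \<partial>M) < e" .
  qed
qed

lemma int_cong_sp: "integrable M g \<Longrightarrow> (\<And>x. x \<in> space M \<Longrightarrow> f x = g x) \<Longrightarrow> integrable M f"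
  using Bochner_Integration.integrable_cong[OF refl, of M f g] by simp

lemma integral_cong_sp: "(\<And>x. x \<in> space M \<Longrightarrow> f x = g x) \<Longrightarrow> integral\<^sup>L M f = integral\<^sup>L M g"
  by (rule Bochner_Integration.integral_cong[OF refl])

theorem proposition3p2:
  fixes M :: "'a measure" and \<Phi> :: "real \<Rightarrow> real" and X Y :: "'a \<Rightarrow> real"
  assumes "prob_space M" and "nonatomic M"
    and "orlicz_function \<Phi>"
    and "X \<in> orlicz_space M \<Phi>"
    and "Y \<in> orlicz_space M (orlicz_conj \<Phi>)"
    and "AE \<omega> in M. 0 \<le> Y \<omega>"
  shows "\<forall>\<epsilon>>0. \<exists>\<pi>\<^sub>0\<in>fin_partitions M. \<forall>\<pi>\<in>fin_partitions M. refines \<pi> \<pi>\<^sub>0 \<longrightarrow>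
           (\<integral>\<^sup>+ \<omega>. ennreal (\<bar>cond_exp_part M \<pi> X \<omega> - X \<omega>\<bar> * Y \<omega>) \<partial>M) < ennreal \<epsilon>"
proof (intro allI impI)
  fix \<epsilon> :: real assume \<epsilon>: "\<epsilon> > 0"
  note pr = assms(1)
  interpret prob_space M by (rule pr)
  note orl = assms(3)
  have cvx: "convex_on {0..} \<Phi>" and mo: "mono_on {0..} \<Phi>" and z: "\<Phi> 0 = 0"
    using orl unfolding orlicz_function_def by auto
  have \<Phi>nn: "\<forall>t\<ge>0. 0 \<le> \<Phi> t" using mo z unfolding mono_on_def by (metis atLeast_iff order_refl)
  define \<Psi> where "\<Psi> = orlicz_conj \<Phi>"
  have \<Psi>nn: "\<forall>t\<ge>0. 0 \<le> \<Psi> t" using conj_nonneg[OF orl] unfolding \<Psi>_def by simp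
  have \<Psi>mo: "mono_on {0..} \<Psi>" using conj_mono[OF orl] unfolding \<Psi>_def by simp
  have yg: "a * b \<le> \<Phi> a + \<Psi> b" if "0 \<le> a" for a b using young[OF orl that] unfolding \<Psi>_def .
  obtain cX where cX: "cX > 0" and iPX: "integrable M (\<lambda>\<omega>. \<Phi> (\<bar>X \<omega>\<bar> / cX))"
    and Xm[measurable]: "X \<in> borel_measurable M"
    using orlicz_int[OF mo \<Phi>nn assms(4)] by blast
  obtain cY where cY: "cY > 0" and iPY: "integrable M (\<lambda>\<omega>. \<Psi> (\<bar>Y \<omega>\<bar> / cY))"
    and Ym[measurable]: "Y \<in> borel_measurable M"
    using orlicz_int[OF \<Psi>mo \<Psi>nn assms(5)[folded \<Psi>_def]] by blast
  define K where "K = cX * cY"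
  have K: "K > 0" unfolding K_def using cX cY by simp
  have iX: "integrable M X"
  proof (rule Bochner_Integration.integrable_bound[OF _ Xm])
    show "integrable M (\<lambda>\<omega>. cX * \<Phi> (\<bar>X \<omega>\<bar> / cX) + cX * \<Psi> 1)" using iPX by simp
    show "AE \<omega> in M. norm (X \<omega>) \<le> norm (cX * \<Phi> (\<bar>X \<omega>\<bar> / cX) + cX * \<Psi> 1)"
    proof (rule AE_I2)
      fix \<omega>
      have "\<bar>X \<omega>\<bar> / cX * 1 \<le> \<Phi> (\<bar>X \<omega>\<bar> / cX) + \<Psi> 1" by (rule yg) (use cX in simp)
      then have "\<bar>X \<omega>\<bar> \<le> cX * \<Phi> (\<bar>X \<omega>\<bar> / cX) + cX * \<Psi> 1"
        using cX by (simp add: field_simps)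
      moreover have "0 \<le> cX * \<Phi> (\<bar>X \<omega>\<bar> / cX) + cX * \<Psi> 1" using cX \<Phi>nn \<Psi>nn by simp
      ultimately show "norm (X \<omega>) \<le> norm (cX * \<Phi> (\<bar>X \<omega>\<bar> / cX) + cX * \<Psi> 1)" by simp
    qed
  qed
  have iY: "integrable M Y"
  proof (rule Bochner_Integration.integrable_bound[OF _ Ym])
    show "integrable M (\<lambda>\<omega>. cY * \<Phi> 1 + cY * \<Psi> (\<bar>Y \<omega>\<bar> / cY))" using iPY by simp
    show "AE \<omega> in M. norm (Y \<omega>) \<le> norm (cY * \<Phi> 1 + cY * \<Psi> (\<bar>Y \<omega>\<bar> / cY))"
    proof (rule AE_I2)
      fix \<omega>
      have "1 * (\<bar>Y \<omega>\<bar> / cY) \<le> \<Phi> 1 + \<Psi> (\<bar>Y \<omega>\<bar> / cY)" by (rule yg) simp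
      then have "\<bar>Y \<omega>\<bar> \<le> cY * \<Phi> 1 + cY * \<Psi> (\<bar>Y \<omega>\<bar> / cY)"
        using cY by (simp add: field_simps)
      moreover have "0 \<le> cY * \<Phi> 1 + cY * \<Psi> (\<bar>Y \<omega>\<bar> / cY)" using cY \<Phi>nn \<Psi>nn by simp
      ultimately show "norm (Y \<omega>) \<le> norm (cY * \<Phi> 1 + cY * \<Psi> (\<bar>Y \<omega>\<bar> / cY))" by simp
    qed
  qed
  have iXY: "integrable M (\<lambda>\<omega>. \<bar>X \<omega>\<bar> * \<bar>Y \<omega>\<bar>)"
  proof (rule Bochner_Integration.integrable_bound)
    show "integrable M (\<lambda>\<omega>. K * \<Phi> (\<bar>X \<omega>\<bar> / cX) + K * \<Psi> (\<bar>Y \<omega>\<bar> / cY))" using iPX iPY by simp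
    show "(\<lambda>\<omega>. \<bar>X \<omega>\<bar> * \<bar>Y \<omega>\<bar>) \<in> borel_measurable M" by measurable
    show "AE \<omega> in M. norm (\<bar>X \<omega>\<bar> * \<bar>Y \<omega>\<bar>) \<le> norm (K * \<Phi> (\<bar>X \<omega>\<bar> / cX) + K * \<Psi> (\<bar>Y \<omega>\<bar> / cY))"
    proof (rule AE_I2)
      fix \<omega>
      have "(\<bar>X \<omega>\<bar> / cX) * (\<bar>Y \<omega>\<bar> / cY) \<le> \<Phi> (\<bar>X \<omega>\<bar> / cX) + \<Psi> (\<bar>Y \<omega>\<bar> / cY)"
        by (rule yg) (use cX in simp)
      then have "K * ((\<bar>X \<omega>\<bar> / cX) * (\<bar>Y \<omega>\<bar> / cY)) \<le> K * (\<Phi> (\<bar>X \<omega>\<bar> / cX) + \<Psi> (\<bar>Y \<omega>\<bar> / cY))"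
        using K by (intro mult_left_mono) auto
      then have "\<bar>X \<omega>\<bar> * \<bar>Y \<omega>\<bar> \<le> K * \<Phi> (\<bar>X \<omega>\<bar> / cX) + K * \<Psi> (\<bar>Y \<omega>\<bar> / cY)"
        using cX cY unfolding K_def by (simp add: field_simps)
      moreover have "0 \<le> K * \<Phi> (\<bar>X \<omega>\<bar> / cX) + K * \<Psi> (\<bar>Y \<omega>\<bar> / cY)" using K cX cY \<Phi>nn \<Psi>nn by simp
      ultimately show "norm (\<bar>X \<omega>\<bar> * \<bar>Y \<omega>\<bar>) \<le> norm (K * \<Phi> (\<bar>X \<omega>\<bar> / cX) + K * \<Psi> (\<bar>Y \<omega>\<bar> / cY))"
        by simp
    qed
  qed
  define EY where "EY = (\<integral>\<omega>. \<bar>Y \<omega>\<bar> \<partial>M)"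
  have EY: "0 \<le> EY" unfolding EY_def by simp
  define \<eta> where "\<eta> = \<epsilon> / (3 + 2 * K)"
  have \<eta>: "\<eta> > 0" unfolding \<eta>_def using \<epsilon> K by simp
  have \<eta>\<epsilon>: "(3 + 2 * K) * \<eta> = \<epsilon>" unfolding \<eta>_def using K by simp
  define \<delta> where "\<delta> = \<eta> / (2 * (EY + 1))"
  have \<delta>: "\<delta> > 0" unfolding \<delta>_def using \<eta> EY by simp
  have \<delta>EY: "2 * \<delta> * EY < \<eta>"
  proof -
    have "2 * \<delta> * EY = \<eta> * (EY / (EY + 1))" unfolding \<delta>_def using EY by (simp add: field_simps)
    also have "\<dots> < \<eta> * 1" using \<eta> EY by (intro mult_strict_left_mono) auto
    finally show ?thesis by simp
  qed
  have absPsi: "\<And>\<omega>. \<bar>\<Psi> (\<bar>Y \<omega>\<bar> / cY)\<bar> = \<Psi> (\<bar>Y \<omega>\<bar> / cY)" using \<Psi>nn cY by simp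
  have absPhi: "\<And>\<omega>. \<bar>\<Phi> (\<bar>X \<omega>\<bar> / cX)\<bar> = \<Phi> (\<bar>X \<omega>\<bar> / cX)" using \<Phi>nn cX by simp
  obtain m0 where m0: "\<forall>n\<ge>m0. (\<integral>\<omega>. \<bar>\<Psi> (\<bar>Y \<omega>\<bar> / cY)\<bar> * indicator {\<omega>\<in>space M. n < \<bar>Y \<omega>\<bar>} \<omega> \<partial>M) < \<eta>"
    using tail_small[OF iPY Ym \<eta>] by blast
  define m where "m = max m0 0"
  define TY where "TY = {\<omega>\<in>space M. m < \<bar>Y \<omega>\<bar>}"
  have TYm: "TY \<in> sets M" unfolding TY_def by measurable
  have m: "m \<ge> 0" "(\<integral>\<omega>. \<Psi> (\<bar>Y \<omega>\<bar> / cY) * indicator TY \<omega> \<partial>M) < \<eta>"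
    using m0[rule_format, of m] unfolding m_def TY_def absPsi by auto
  have \<eta>m: "\<eta> / (m + 1) > 0" using \<eta> m by simp
  obtain n1 where n1: "\<forall>n\<ge>n1. (\<integral>\<omega>. \<bar>\<Phi> (\<bar>X \<omega>\<bar> / cX)\<bar> * indicator {\<omega>\<in>space M. n < \<bar>X \<omega>\<bar>} \<omega> \<partial>M) < \<eta>"
    using tail_small[OF iPX Xm \<eta>] by blast
  obtain n2 where n2: "\<forall>n\<ge>n2. (\<integral>\<omega>. \<bar>X \<omega>\<bar> * indicator {\<omega>\<in>space M. n < \<bar>X \<omega>\<bar>} \<omega> \<partial>M) < \<eta> / (m + 1)"
    using tail_small[OF iX Xm \<eta>m] by blast
  obtain n3 where n3: "\<forall>n\<ge>n3. (\<integral>\<omega>. \<bar>\<bar>X \<omega>\<bar> * \<bar>Y \<omega>\<bar>\<bar> * indicator {\<omega>\<in>space M. n < \<bar>X \<omega>\<bar>} \<omega> \<partial>M) < \<eta>"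
    using tail_small[OF iXY Xm \<eta>] by blast
  define n where "n = max (max n1 n2) (max n3 0)"
  have n0: "n \<ge> 0" unfolding n_def by simp
  define T where "T = {\<omega>\<in>space M. n < \<bar>X \<omega>\<bar>}"
  have Tm: "T \<in> sets M" unfolding T_def by measurable
  have t1: "(\<integral>\<omega>. \<Phi> (\<bar>X \<omega>\<bar> / cX) * indicator T \<omega> \<partial>M) < \<eta>"
    using n1[rule_format, of n] unfolding T_def n_def absPhi by auto
  have t2: "(\<integral>\<omega>. \<bar>X \<omega>\<bar> * indicator T \<omega> \<partial>M) < \<eta> / (m + 1)"
    using n2[rule_format, of n] unfolding T_def n_def by auto
  have t3: "(\<integral>\<omega>. \<bar>X \<omega>\<bar> * \<bar>Y \<omega>\<bar> * indicator T \<omega> \<partial>M) < \<eta>"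
    using n3[rule_format, of n] unfolding T_def n_def by (auto simp: abs_mult)
  define R where "R \<omega> = (if n < \<bar>X \<omega>\<bar> then X \<omega> else 0)" for \<omega>
  have Rm[measurable]: "R \<in> borel_measurable M" unfolding R_def by measurable
  have R1: "\<bar>R \<omega>\<bar> = \<bar>X \<omega>\<bar> * indicator T \<omega>" if "\<omega> \<in> space M" for \<omega>
    using that by (auto simp: R_def T_def indicator_def)
  have R2: "\<Phi> (\<bar>R \<omega>\<bar> / cX) = \<Phi> (\<bar>X \<omega>\<bar> / cX) * indicator T \<omega>" if "\<omega> \<in> space M" for \<omega>
    using that z by (auto simp: R_def T_def indicator_def)
  have R3: "\<bar>R \<omega>\<bar> * \<bar>Y \<omega>\<bar> = \<bar>X \<omega>\<bar> * \<bar>Y \<omega>\<bar> * indicator T \<omega>" if "\<omega> \<in> space M" for \<omega>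
    using that by (auto simp: R_def T_def indicator_def)
  have iR: "integrable M (\<lambda>\<omega>. \<bar>R \<omega>\<bar>)"
    by (rule int_cong_sp[OF _ R1]) (rule integrable_real_mult_indicator[OF Tm], simp add: iX)
  have intR: "(\<integral>\<omega>. \<bar>R \<omega>\<bar> \<partial>M) < \<eta> / (m + 1)"
  proof -
    have "(\<integral>\<omega>. \<bar>R \<omega>\<bar> \<partial>M) = (\<integral>\<omega>. \<bar>X \<omega>\<bar> * indicator T \<omega> \<partial>M)" by (rule integral_cong_sp) (rule R1)
    then show ?thesis using t2 by simp
  qed
  have iPR: "integrable M (\<lambda>\<omega>. \<Phi> (\<bar>R \<omega>\<bar> / cX))"
    by (rule int_cong_sp[OF _ R2]) (rule integrable_real_mult_indicator[OF Tm], simp add: iPX)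
  have intPR: "(\<integral>\<omega>. \<Phi> (\<bar>R \<omega>\<bar> / cX) \<partial>M) < \<eta>"
  proof -
    have "(\<integral>\<omega>. \<Phi> (\<bar>R \<omega>\<bar> / cX) \<partial>M) = (\<integral>\<omega>. \<Phi> (\<bar>X \<omega>\<bar> / cX) * indicator T \<omega> \<partial>M)" by (rule integral_cong_sp) (rule R2)
    then show ?thesis using t1 by simp
  qed
  have iRY: "integrable M (\<lambda>\<omega>. \<bar>R \<omega>\<bar> * \<bar>Y \<omega>\<bar>)"
    by (rule int_cong_sp[OF _ R3]) (rule integrable_real_mult_indicator[OF Tm], simp add: iXY)
  have intRY: "(\<integral>\<omega>. \<bar>R \<omega>\<bar> * \<bar>Y \<omega>\<bar> \<partial>M) < \<eta>"
  proof -
    have "(\<integral>\<omega>. \<bar>R \<omega>\<bar> * \<bar>Y \<omega>\<bar> \<partial>M) = (\<integral>\<omega>. \<bar>X \<omega>\<bar> * \<bar>Y \<omega>\<bar> * indicator T \<omega> \<partial>M)" by (rule integral_cong_sp) (rule R3)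
    then show ?thesis using t3 by simp
  qed
  define S where "S \<omega> = (if \<bar>X \<omega>\<bar> \<le> n then \<delta> * of_int \<lfloor>X \<omega> / \<delta>\<rfloor> else 0)" for \<omega>
  have Sm[measurable]: "S \<in> borel_measurable M" unfolding S_def by measurable
  have XS: "\<bar>X \<omega> - S \<omega>\<bar> \<le> \<delta> + \<bar>R \<omega>\<bar>" for \<omega>
  proof (cases "\<bar>X \<omega>\<bar> \<le> n")
    case True
    have "of_int \<lfloor>X \<omega> / \<delta>\<rfloor> \<le> X \<omega> / \<delta>" "X \<omega> / \<delta> < of_int \<lfloor>X \<omega> / \<delta>\<rfloor> + 1"
      using floor_correct[of "X \<omega> / \<delta>"] by auto
    then have "of_int \<lfloor>X \<omega> / \<delta>\<rfloor> * \<delta> \<le> X \<omega>" "X \<omega> < (of_int \<lfloor>X \<omega> / \<delta>\<rfloor> + 1) * \<delta>"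
      unfolding pos_le_divide_eq[OF \<delta>] pos_divide_less_eq[OF \<delta>] by auto
    then have "\<delta> * of_int \<lfloor>X \<omega> / \<delta>\<rfloor> \<le> X \<omega>" "X \<omega> < \<delta> * of_int \<lfloor>X \<omega> / \<delta>\<rfloor> + \<delta>"
      by (simp_all add: algebra_simps)
    moreover have "R \<omega> = 0" using True by (simp add: R_def)
    ultimately show ?thesis using True by (simp add: S_def)
  next
    case False then show ?thesis using \<delta> by (simp add: S_def R_def)
  qed
  define N where "N = \<lceil>n / \<delta>\<rceil> + 1"
  have N0: "0 \<le> N"
  proof -
    have "0 \<le> n / \<delta>" using n0 \<delta> by simp
    then have "(0::real) \<le> of_int \<lceil>n / \<delta>\<rceil>" using le_of_int_ceiling[of "n / \<delta>"] by linarith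
    then show ?thesis unfolding N_def by simp
  qed
  have "S ` space M \<subseteq> (\<lambda>k. \<delta> * of_int k) ` {-N..N}"
  proof
    fix v assume "v \<in> S ` space M"
    then obtain \<omega> where v: "v = S \<omega>" by auto
    show "v \<in> (\<lambda>k. \<delta> * of_int k) ` {-N..N}"
    proof (cases "\<bar>X \<omega>\<bar> \<le> n")
      case True
      define k where "k = \<lfloor>X \<omega> / \<delta>\<rfloor>"
      have "\<bar>X \<omega>\<bar> / \<delta> \<le> n / \<delta>" using True \<delta> by (simp add: divide_right_mono)
      then have "\<bar>X \<omega> / \<delta>\<bar> \<le> n / \<delta>" using \<delta> by (simp add: abs_divide)
      then have a: "- (n / \<delta>) \<le> X \<omega> / \<delta>" "X \<omega> / \<delta> \<le> n / \<delta>" unfolding abs_le_iff by linarith+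
      have b: "of_int k \<le> X \<omega> / \<delta>" "X \<omega> / \<delta> < of_int k + 1"
        using floor_correct[of "X \<omega> / \<delta>"] unfolding k_def by auto
      have c: "n / \<delta> \<le> of_int \<lceil>n / \<delta>\<rceil>" by (rule le_of_int_ceiling)
      have "(of_int (-N) :: real) \<le> of_int k" "(of_int k :: real) \<le> of_int N"
        using a b c unfolding N_def of_int_add of_int_minus of_int_1 by linarith+
      then have "k \<in> {-N..N}" by (simp only: of_int_le_iff) auto
      then show ?thesis using True v unfolding S_def k_def by auto
    next
      case False
      then have "v = \<delta> * of_int 0" using v by (simp add: S_def)
      moreover have "(0::int) \<in> {-N..N}" using N0 by simp
      ultimately show ?thesis by blast
    qed
  qed
  then have Sfin: "finite (S ` space M)" by (rule finite_subset) simp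
  have iS: "integrable M S"
  proof (rule Bochner_Integration.integrable_bound[OF _ Sm])
    show "integrable M (\<lambda>\<omega>. \<bar>X \<omega>\<bar> + \<delta> + \<bar>R \<omega>\<bar>)" using iX iR by simp
    show "AE \<omega> in M. norm (S \<omega>) \<le> norm (\<bar>X \<omega>\<bar> + \<delta> + \<bar>R \<omega>\<bar>)"
    proof (rule AE_I2)
      fix \<omega> show "norm (S \<omega>) \<le> norm (\<bar>X \<omega>\<bar> + \<delta> + \<bar>R \<omega>\<bar>)"
        using XS[of \<omega>] \<delta> by simp
    qed
  qed
  obtain \<pi>0 S' where \<pi>0: "\<pi>0 \<in> fin_partitions M" and S'c: "\<forall>A\<in>\<pi>0. \<forall>x\<in>A. \<forall>y\<in>A. S' x = S' y"
    and SS': "AE x in M. S x = S' x"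
    using mk_partition[OF pr Sm Sfin] by blast
  show "\<exists>\<pi>\<^sub>0\<in>fin_partitions M. \<forall>\<pi>\<in>fin_partitions M. refines \<pi> \<pi>\<^sub>0 \<longrightarrow>
           (\<integral>\<^sup>+ \<omega>. ennreal (\<bar>cond_exp_part M \<pi> X \<omega> - X \<omega>\<bar> * Y \<omega>) \<partial>M) < ennreal \<epsilon>"
  proof (intro bexI[OF _ \<pi>0] ballI impI)
    fix \<pi> assume \<pi>: "\<pi> \<in> fin_partitions M" and ref: "refines \<pi> \<pi>0"
    define F where "F = sigma (space M) \<pi>"
    interpret sf: sigma_finite_subalgebra M F unfolding F_def by (rule fin_part_subalg[OF pr \<pi>])
    have S'c2: "\<forall>B\<in>\<pi>. \<forall>x\<in>B. \<forall>y\<in>B. S' x = S' y" using ref S'c unfolding refines_def by blast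
    have S'F: "S' \<in> borel_measurable F" unfolding F_def by (rule const_meas[OF \<pi> S'c2])
    have S'm[measurable]: "S' \<in> borel_measurable M" by (rule measurable_from_subalg[OF sf.subalg S'F])
    have iS': "integrable M S'" using iS integrable_cong_AE[OF Sm S'm SS'] by simp
    define Z where "Z \<omega> = X \<omega> - S' \<omega>" for \<omega>
    have Zm[measurable]: "Z \<in> borel_measurable M" unfolding Z_def by measurable
    have iZ: "integrable M Z" unfolding Z_def using iX iS' by simp
    have iaZ: "integrable M (\<lambda>\<omega>. \<bar>Z \<omega>\<bar>)" using iZ by simp
    have Zb: "AE \<omega> in M. \<bar>Z \<omega>\<bar> \<le> \<delta> + \<bar>R \<omega>\<bar>"
      using SS'
    proof eventually_elim
      case (elim \<omega>)
      have "\<bar>X \<omega> - S \<omega>\<bar> \<le> \<delta> + \<bar>R \<omega>\<bar>" by (rule XS)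
      then show ?case using elim by (simp add: Z_def)
    qed
    let ?E = "real_cond_exp M F"
    have e1: "AE \<omega> in M. ?E X \<omega> = ?E Z \<omega> + S' \<omega>"
    proof -
      have "AE \<omega> in M. ?E (\<lambda>\<omega>. Z \<omega> + S' \<omega>) \<omega> = ?E Z \<omega> + ?E S' \<omega>"
        by (rule sf.real_cond_exp_add[OF iZ iS'])
      moreover have "AE \<omega> in M. ?E S' \<omega> = S' \<omega>" by (rule sf.real_cond_exp_F_meas[OF iS' S'F])
      moreover have "(\<lambda>\<omega>. Z \<omega> + S' \<omega>) = X" by (simp add: Z_def fun_eq_iff)
      ultimately show ?thesis by auto
    qed
    have e2: "AE \<omega> in M. \<bar>?E Z \<omega>\<bar> \<le> ?E (\<lambda>\<omega>. \<bar>Z \<omega>\<bar>) \<omega>"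
    proof -
      have "AE \<omega> in M. ?E Z \<omega> \<le> ?E (\<lambda>\<omega>. \<bar>Z \<omega>\<bar>) \<omega>"
        by (rule sf.real_cond_exp_mono) (use iZ in \<open>auto intro!: AE_I2\<close>)
      moreover have "AE \<omega> in M. ?E (\<lambda>\<omega>. -1 * Z \<omega>) \<omega> \<le> ?E (\<lambda>\<omega>. \<bar>Z \<omega>\<bar>) \<omega>"
        by (rule sf.real_cond_exp_mono) (use iZ in \<open>auto intro!: AE_I2\<close>)
      moreover have "AE \<omega> in M. ?E (\<lambda>\<omega>. -1 * Z \<omega>) \<omega> = -1 * ?E Z \<omega>"
        by (rule sf.real_cond_exp_cmult[OF iZ])
      ultimately show ?thesis by eventually_elim auto
    qed
    have e3: "AE \<omega> in M. ?E (\<lambda>\<omega>. \<bar>Z \<omega>\<bar>) \<omega> \<le> \<delta> + ?E (\<lambda>\<omega>. \<bar>R \<omega>\<bar>) \<omega>"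
    proof -
      have "AE \<omega> in M. ?E (\<lambda>\<omega>. \<bar>Z \<omega>\<bar>) \<omega> \<le> ?E (\<lambda>\<omega>. \<delta> + \<bar>R \<omega>\<bar>) \<omega>"
        by (rule sf.real_cond_exp_mono[OF Zb iaZ]) (use iR in simp)
      moreover have "AE \<omega> in M. ?E (\<lambda>\<omega>. \<delta> + \<bar>R \<omega>\<bar>) \<omega> = ?E (\<lambda>\<omega>. \<delta>) \<omega> + ?E (\<lambda>\<omega>. \<bar>R \<omega>\<bar>) \<omega>"
        by (rule sf.real_cond_exp_add) (use iR in simp_all)
      moreover have "AE \<omega> in M. ?E (\<lambda>\<omega>. \<delta>) \<omega> = \<delta>"
        by (rule sf.real_cond_exp_F_meas) simp_all
      ultimately show ?thesis by eventually_elim auto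
    qed
    define q where "q t = \<Phi> (max 0 t)" for t
    have qc: "convex_on UNIV q" unfolding q_def by (rule ext_convex[OF cvx mo])
    have qm: "q \<in> borel_measurable borel" unfolding q_def by (rule borel_measurable_mono[OF ext_mono[OF mo]])
    have qRf: "(\<lambda>\<omega>. q (\<bar>R \<omega>\<bar> / cX)) = (\<lambda>\<omega>. \<Phi> (\<bar>R \<omega>\<bar> / cX))"
      unfolding q_def using cX by (simp add: fun_eq_iff)
    have iRc: "integrable M (\<lambda>\<omega>. \<bar>R \<omega>\<bar> / cX)" using iR by simp
    have j: "AE \<omega> in M. q (?E (\<lambda>\<omega>. \<bar>R \<omega>\<bar> / cX) \<omega>) \<le> ?E (\<lambda>\<omega>. q (\<bar>R \<omega>\<bar> / cX)) \<omega>"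
      by (rule sf.real_cond_exp_jensens_inequality(2)[OF iRc _ _ _ qc qm]) (simp_all add: qRf iPR)
    have cdiv: "AE \<omega> in M. ?E (\<lambda>\<omega>. \<bar>R \<omega>\<bar> / cX) \<omega> = ?E (\<lambda>\<omega>. \<bar>R \<omega>\<bar>) \<omega> / cX"
      by (rule sf.real_cond_exp_cdiv[OF iR])
    have Rpos: "AE \<omega> in M. 0 \<le> ?E (\<lambda>\<omega>. \<bar>R \<omega>\<bar>) \<omega>" by (rule sf.real_cond_exp_pos) auto
    define J where "J = ?E (\<lambda>\<omega>. \<Phi> (\<bar>R \<omega>\<bar> / cX))"
    have Jge: "AE \<omega> in M. \<Phi> (?E (\<lambda>\<omega>. \<bar>R \<omega>\<bar>) \<omega> / cX) \<le> J \<omega>"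
      using j[unfolded qRf] cdiv Rpos
    proof eventually_elim
      case (elim \<omega>)
      have "max 0 (?E (\<lambda>\<omega>. \<bar>R \<omega>\<bar>) \<omega> / cX) = ?E (\<lambda>\<omega>. \<bar>R \<omega>\<bar>) \<omega> / cX"
        using elim(3) cX by simp
      then show ?case using elim(1,2) unfolding J_def q_def by simp
    qed
    have Jpos: "AE \<omega> in M. 0 \<le> J \<omega>" unfolding J_def
      by (rule sf.real_cond_exp_pos[OF _ borel_measurable_integrable[OF iPR]], rule AE_I2) (use \<Phi>nn cX in simp)
    have iJ: "integrable M J" and intJ: "integral\<^sup>L M J = (\<integral>\<omega>. \<Phi> (\<bar>R \<omega>\<bar> / cX) \<partial>M)"
      unfolding J_def using sf.real_cond_exp_int[OF iPR] by auto
    have iER: "integrable M (?E (\<lambda>\<omega>. \<bar>R \<omega>\<bar>))"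
      and intER: "integral\<^sup>L M (?E (\<lambda>\<omega>. \<bar>R \<omega>\<bar>)) = (\<integral>\<omega>. \<bar>R \<omega>\<bar> \<partial>M)"
      using sf.real_cond_exp_int[OF iR] by auto
    have iPT: "integrable M (\<lambda>\<omega>. \<Psi> (\<bar>Y \<omega>\<bar> / cY) * indicator TY \<omega>)"
      by (rule integrable_real_mult_indicator[OF TYm iPY])
    define bd where "bd \<omega> = 2 * \<delta> * \<bar>Y \<omega>\<bar> + \<bar>R \<omega>\<bar> * \<bar>Y \<omega>\<bar> + m * ?E (\<lambda>\<omega>. \<bar>R \<omega>\<bar>) \<omega> + K * J \<omega>
      + K * (\<Psi> (\<bar>Y \<omega>\<bar> / cY) * indicator TY \<omega>)" for \<omega>
    have pw: "AE \<omega> in M. \<bar>?E X \<omega> - X \<omega>\<bar> * Y \<omega> \<le> bd \<omega>"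
      using e1 e2 e3 Zb Jge Rpos Jpos assms(6) AE_space
    proof eventually_elim
      case (elim \<omega>)
      define a where "a = ?E (\<lambda>\<omega>. \<bar>R \<omega>\<bar>) \<omega>"
      have y: "0 \<le> Y \<omega>" and a0: "0 \<le> a" using elim unfolding a_def by auto
      have "\<bar>?E X \<omega> - X \<omega>\<bar> = \<bar>?E Z \<omega> - Z \<omega>\<bar>" using elim(1) by (simp add: Z_def)
      also have "\<dots> \<le> \<bar>?E Z \<omega>\<bar> + \<bar>Z \<omega>\<bar>" by simp
      also have "\<dots> \<le> (\<delta> + a) + (\<delta> + \<bar>R \<omega>\<bar>)" using elim(2,3,4) unfolding a_def by simp
      finally have "\<bar>?E X \<omega> - X \<omega>\<bar> * Y \<omega> \<le> ((\<delta> + a) + (\<delta> + \<bar>R \<omega>\<bar>)) * Y \<omega>"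
        using y by (rule mult_right_mono)
      also have "\<dots> = 2 * \<delta> * \<bar>Y \<omega>\<bar> + \<bar>R \<omega>\<bar> * \<bar>Y \<omega>\<bar> + a * Y \<omega>" using y by (simp add: algebra_simps)
      also have "a * Y \<omega> \<le> m * a + K * J \<omega> + K * (\<Psi> (\<bar>Y \<omega>\<bar> / cY) * indicator TY \<omega>)"
      proof (cases "\<omega> \<in> TY")
        case True
        have "a * Y \<omega> = K * ((a / cX) * (\<bar>Y \<omega>\<bar> / cY))" using y cX cY unfolding K_def by (simp add: field_simps)
        also have "\<dots> \<le> K * (\<Phi> (a / cX) + \<Psi> (\<bar>Y \<omega>\<bar> / cY))"
          using K a0 cX by (intro mult_left_mono yg) auto
        also have "\<dots> \<le> K * J \<omega> + K * \<Psi> (\<bar>Y \<omega>\<bar> / cY)"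
          using elim(5) K unfolding a_def by (simp add: distrib_left)
        finally show ?thesis using True mult_nonneg_nonneg[OF m(1) a0] by simp
      next
        case False
        then have "Y \<omega> \<le> m" using elim(9) y unfolding TY_def by auto
        then have "a * Y \<omega> \<le> m * a" using a0 by (simp add: mult_left_mono mult.commute)
        moreover have "0 \<le> K * J \<omega>" using K elim(7) by simp
        ultimately show ?thesis using False by simp
      qed
      finally show ?case unfolding bd_def a_def by simp
    qed
    have ibd: "integrable M bd" unfolding bd_def using iY iRY iER iJ iPT by simp
    have bdnn: "AE \<omega> in M. 0 \<le> bd \<omega>"
      using Rpos Jpos
    proof eventually_elim
      case (elim \<omega>)
      then show ?case unfolding bd_def using \<delta> m(1) K \<Psi>nn cY
        by (intro add_nonneg_nonneg mult_nonneg_nonneg) auto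
    qed
    have ibdv: "integral\<^sup>L M bd = 2 * \<delta> * EY + (\<integral>\<omega>. \<bar>R \<omega>\<bar> * \<bar>Y \<omega>\<bar> \<partial>M) + m * (\<integral>\<omega>. \<bar>R \<omega>\<bar> \<partial>M)
        + K * (\<integral>\<omega>. \<Phi> (\<bar>R \<omega>\<bar> / cX) \<partial>M) + K * (\<integral>\<omega>. \<Psi> (\<bar>Y \<omega>\<bar> / cY) * indicator TY \<omega> \<partial>M)"
      unfolding bd_def EY_def using iY iRY iER iJ iPT by (simp add: intJ intER)
    have "m * (\<integral>\<omega>. \<bar>R \<omega>\<bar> \<partial>M) \<le> m * (\<eta> / (m + 1))"
      using intR m(1) by (intro mult_left_mono) auto
    also have "\<dots> \<le> \<eta>" using m(1) \<eta> by (simp add: field_simps)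
    finally have mR: "m * (\<integral>\<omega>. \<bar>R \<omega>\<bar> \<partial>M) \<le> \<eta>" .
    have "K * (\<integral>\<omega>. \<Phi> (\<bar>R \<omega>\<bar> / cX) \<partial>M) < K * \<eta>" using K intPR by simp
    moreover have "K * (\<integral>\<omega>. \<Psi> (\<bar>Y \<omega>\<bar> / cY) * indicator TY \<omega> \<partial>M) < K * \<eta>" using K m(2) by simp
    ultimately have lt: "integral\<^sup>L M bd < \<epsilon>"
      unfolding ibdv \<eta>\<epsilon>[symmetric] using \<delta>EY intRY mR by (simp add: algebra_simps)
    have "AE \<omega> in M. ennreal (\<bar>?E X \<omega> - X \<omega>\<bar> * Y \<omega>) \<le> ennreal (bd \<omega>)"
      using pw by eventually_elim (rule ennreal_leI)
    then have "(\<integral>\<^sup>+ \<omega>. ennreal (\<bar>cond_exp_part M \<pi> X \<omega> - X \<omega>\<bar> * Y \<omega>) \<partial>M) \<le> (\<integral>\<^sup>+ \<omega>. ennreal (bd \<omega>) \<partial>M)"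
      unfolding cond_exp_part_def F_def[symmetric] by (rule nn_integral_mono_AE)
    also have "\<dots> = ennreal (integral\<^sup>L M bd)" by (rule nn_integral_eq_integral[OF ibd bdnn])
    also have "\<dots> < ennreal \<epsilon>" using lt \<epsilon> by (intro ennreal_lessI) auto
    finally show "(\<integral>\<^sup>+ \<omega>. ennreal (\<bar>cond_exp_part M \<pi> X \<omega> - X \<omega>\<bar> * Y \<omega>) \<partial>M) < ennreal \<epsilon>" .
  qed
qed

end
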